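(* Let $k$ be a positive integer and let $G \in \mathcal{C}_3$ be a digraph with $n$ vertices and $m \geq 1$ arcs such that $\vec{\chi}(G) = k$. Let $I$ be an independent set of $G$. Then there exists a digraph $H \in \mathcal{C}_3$ containing $m$ pairwise vertex-disjoint copies $G_1,\dots,G_m$ of $G$ such that: (i) for all $1 \leq i \neq j \leq m$, there is no arc of $H$ between $V(G_i)$ and $V(G_j)$; (ii) for every $k$-dicolouring of $H$, there exist an index $i \in \{1,\dots,m\}$ and a colour $\alpha$ such that no vertex of the copy of $I$ in $G_i$ receives colour $\alpha$. Moreover, $H$ has $n(m+1) \leq n^4$ vertices and at most $m(m+1) + m n^2 \leq n^4$ arcs.
   Context: All digraphs are finite and simple: no loops, no multiple arcs, and for two distinct vertices $u,v$ at most one of the arcs $uv$, $vu$ is present. A $k$-dicolouring of a digraph $D$ is a partition of $V(D)$ into $k$ sets $V_1,\dots,V_k$ (some possibly empty), the colour classes, such that each induced subdigraph $D[V_i]$ is acyclic (contains no directed cycle). The dichromatic number $\vec{\chi}(D)$ is the smallest $k$ such that $D$ admits a $k$-dicolouring. $TT_3$ denotes the transitive tournament on 3 vertices; $\mathcal{C}_3$ is the class of digraphs that contain no $TT_3$ as a subdigraph and contain no induced directed cycle of length at least $4$. An independent set is a set of vertices no two of which are joined by an arc. A copy of $G$ in $H$ is an induced subdigraph of $H$ together with a fixed isomorphism from $G$ onto it; the copy of $I$ in that copy is the image of $I$ under this isomorphism. *)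

theory Defs
  imports Main
begin

definition digraph :: "'a set \<Rightarrow> ('a \<times> 'a) set \<Rightarrow> bool" where
  "digraph V A \<longleftrightarrow> finite V \<and> A \<subseteq> V \<times> V \<and> (\<forall>v. (v, v) \<notin> A)
     \<and> (\<forall>u v. (u, v) \<in> A \<longrightarrow> (v, u) \<notin> A)"

definition induced_arcs :: "('a \<times> 'a) set \<Rightarrow> 'a set \<Rightarrow> ('a \<times> 'a) set" where
  "induced_arcs A S = A \<inter> (S \<times> S)"

definition dicolouring :: "'a set \<Rightarrow> ('a \<times> 'a) set \<Rightarrow> nat \<Rightarrow> ('a \<Rightarrow> nat) \<Rightarrow> bool" where
  "dicolouring V A k c \<longleftrightarrow> (\<forall>v\<in>V. c v < k)
     \<and> (\<forall>i<k. acyclic (induced_arcs A {v \<in> V. c v = i}))"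

definition dichromatic_number :: "'a set \<Rightarrow> ('a \<times> 'a) set \<Rightarrow> nat" where
  "dichromatic_number V A = (LEAST k. \<exists>c. dicolouring V A k c)"

definition has_TT3 :: "'a set \<Rightarrow> ('a \<times> 'a) set \<Rightarrow> bool" where
  "has_TT3 V A \<longleftrightarrow> (\<exists>x\<in>V. \<exists>y\<in>V. \<exists>z\<in>V. x \<noteq> y \<and> y \<noteq> z \<and> x \<noteq> z
       \<and> (x, y) \<in> A \<and> (y, z) \<in> A \<and> (x, z) \<in> A)"

definition induced_dicycle :: "'a set \<Rightarrow> ('a \<times> 'a) set \<Rightarrow> 'a list \<Rightarrow> bool" where
  "induced_dicycle V A vs \<longleftrightarrow> distinct vs \<and> set vs \<subseteq> V \<and> length vs \<ge> 2
     \<and> (\<forall>i < length vs. \<forall>j < length vs.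
          (vs ! i, vs ! j) \<in> A \<longleftrightarrow> j = Suc i mod length vs)"

definition class_C3 :: "'a set \<Rightarrow> ('a \<times> 'a) set \<Rightarrow> bool" where
  "class_C3 V A \<longleftrightarrow> digraph V A \<and> \<not> has_TT3 V A
     \<and> \<not> (\<exists>vs. induced_dicycle V A vs \<and> length vs \<ge> 4)"

definition independent_set :: "'a set \<Rightarrow> ('a \<times> 'a) set \<Rightarrow> 'a set \<Rightarrow> bool" where
  "independent_set V A I \<longleftrightarrow> I \<subseteq> V \<and> (\<forall>u\<in>I. \<forall>v\<in>I. (u, v) \<notin> A)"

definition is_copy :: "'a set \<Rightarrow> ('a \<times> 'a) set \<Rightarrow> 'b set \<Rightarrow> ('b \<times> 'b) set \<Rightarrow> ('a \<Rightarrow> 'b) \<Rightarrow> bool" where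
  "is_copy V A W B f \<longleftrightarrow> inj_on f V \<and> f ` V \<subseteq> W
     \<and> (\<forall>u\<in>V. \<forall>v\<in>V. (f u, f v) \<in> B \<longleftrightarrow> (u, v) \<in> A)"

end

theory Submission
  imports Defs
begin


definition pcyc :: "('a \<times> 'a) set \<Rightarrow> nat \<Rightarrow> (nat \<Rightarrow> 'a) \<Rightarrow> bool" where
  "pcyc R l g \<longleftrightarrow> 1 \<le> l \<and> (\<forall>t. g (t + l) = g t) \<and> (\<forall>t. (g t, g (Suc t)) \<in> R)"

lemma pcyc_mod:
  assumes "pcyc R l g" shows "g (t mod l) = g t"
proof -
  have per: "g (s + q * l) = g s" for s q
  proof (induction q)
    case 0 then show ?case by simp
  next
    case (Suc q)
    have "g (s + Suc q * l) = g ((s + q * l) + l)" by (simp add: algebra_simps)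
    also have "\<dots> = g (s + q * l)" using assms by (simp add: pcyc_def)
    finally show ?case using Suc by simp
  qed
  have "t = t mod l + (t div l) * l" by simp
  then show ?thesis using per[of "t mod l" "t div l"] by metis
qed

lemma not_acyclic_pcyc:
  assumes "\<not> acyclic R" shows "\<exists>l g. pcyc R l g"
proof -
  obtain x where "(x, x) \<in> R\<^sup>+" using assms by (auto simp: acyclic_def)
  then obtain n where n: "n > 0" "(x, x) \<in> R ^^ n" by (auto simp: trancl_power)
  then obtain f where f: "f 0 = x" "f n = x" "\<forall>i<n. (f i, f (Suc i)) \<in> R"
    by (auto simp: relpow_fun_conv)
  define g where "g t = f (t mod n)" for t
  have "pcyc R n g"
    unfolding pcyc_def
  proof (intro conjI allI)
    show "1 \<le> n" using n by simp
    fix t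
    show "g (t + n) = g t" by (simp add: g_def)
    have lt: "t mod n < n" using n by simp
    show "(g t, g (Suc t)) \<in> R"
    proof (cases "Suc (t mod n) = n")
      case True
      then have "g (Suc t) = f n" using f by (simp add: g_def mod_Suc)
      then show ?thesis using f(3) lt True by (metis g_def)
    next
      case False
      then have "g (Suc t) = f (Suc (t mod n))" by (simp add: g_def mod_Suc)
      then show ?thesis using f(3) lt by (simp add: g_def)
    qed
  qed
  then show ?thesis by blast
qed

lemma pcyc_not_acyclic:
  assumes "pcyc R l g" shows "\<not> acyclic R"
proof -
  have arc: "(g t, g (Suc t)) \<in> R" for t using assms by (simp add: pcyc_def)
  have tr: "(g a, g (a + Suc d)) \<in> R\<^sup>+" for a d
  proof (induction d)
    case 0 then show ?case using arc[of a] by simp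
  next
    case (Suc d)
    then show ?case using arc[of "a + Suc d"] by (simp add: trancl_into_trancl)
  qed
  have l: "l \<ge> 1" "g (0 + l) = g 0" using assms unfolding pcyc_def by blast+
  then have "(g 0, g 0) \<in> R\<^sup>+" using tr[of 0 "l - 1"] by simp
  then show ?thesis by (auto simp: acyclic_def)
qed

lemma acyclic_iff_pcyc: "acyclic R \<longleftrightarrow> (\<nexists>l g. pcyc R l g)"
  using not_acyclic_pcyc pcyc_not_acyclic by blast

lemma pcyc_mono: "pcyc R l g \<Longrightarrow> (\<And>t. (g t, g (Suc t)) \<in> R \<Longrightarrow> (h (g t), h (g (Suc t))) \<in> R')
  \<Longrightarrow> pcyc R' l (h \<circ> g)"
  by (simp add: pcyc_def)



lemma pcyc_shift: assumes "pcyc R l g" shows "pcyc R l (\<lambda>t. g (t + i))"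
  unfolding pcyc_def
proof (intro conjI allI)
  show "1 \<le> l" using assms by (simp add: pcyc_def)
  fix t
  have "g ((t + i) + l) = g (t + i)" using assms unfolding pcyc_def by blast
  then show "g (t + l + i) = g (t + i)" by (simp add: add.commute add.left_commute)
  show "(g (t + i), g (Suc t + i)) \<in> R" using assms unfolding pcyc_def by simp
qed

lemma pcyc_shortcut:
  assumes c: "pcyc R l g" and d: "2 \<le> d" "d < l" and ch: "(g 0, g d) \<in> R"
  shows "pcyc R (l - d + 1) (\<lambda>t. if t mod (l - d + 1) = 0 then g 0 else g (d + t mod (l - d + 1) - 1))"
    (is "pcyc R ?l ?h")
  unfolding pcyc_def
proof (intro conjI allI)
  show "1 \<le> ?l" by simp
  fix t
  show "?h (t + ?l) = ?h t" by (simp only: mod_add_self2)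
  have arc: "(g s, g (Suc s)) \<in> R" for s using c by (simp add: pcyc_def)
  have gl: "g l = g 0" using c unfolding pcyc_def by (metis add_0)
  have r: "t mod ?l < ?l" by simp
  show "(?h t, ?h (Suc t)) \<in> R"
  proof (cases "t mod ?l = 0")
    case True
    then have "Suc t mod ?l = 1" using d by (simp add: mod_Suc)
    then show ?thesis using True ch by simp
  next
    case False
    show ?thesis
    proof (cases "Suc (t mod ?l) = ?l")
      case True
      then have "Suc t mod ?l = 0" by (simp add: mod_Suc)
      moreover have "d + t mod ?l - 1 = l - 1" using True d by linarith
      ultimately show ?thesis using False arc[of "l - 1"] gl d by simp
    next
      case F2: False
      then have "Suc t mod ?l = Suc (t mod ?l)" by (simp add: mod_Suc)
      moreover have "d + Suc (t mod ?l) - 1 = Suc (d + t mod ?l - 1)" using False by simp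
      ultimately show ?thesis using False arc[of "d + t mod ?l - 1"] by simp
    qed
  qed
qed

lemma pcyc_sub:
  assumes c: "pcyc R l g" and ij: "i < j" and eq: "g i = g j"
  shows "pcyc R (j - i) (\<lambda>t. g (i + t mod (j - i)))" (is "pcyc R ?p ?h")
  unfolding pcyc_def
proof (intro conjI allI)
  show "1 \<le> ?p" using ij by simp
  fix t
  show "?h (t + ?p) = ?h t" by simp
  have arc: "(g s, g (Suc s)) \<in> R" for s using c by (simp add: pcyc_def)
  show "(?h t, ?h (Suc t)) \<in> R"
  proof (cases "Suc (t mod ?p) = ?p")
    case True
    then have "Suc t mod ?p = 0" by (simp add: mod_Suc)
    moreover have "i + t mod ?p = j - 1" "Suc (j - 1) = j" using True ij by linarith+
    ultimately show ?thesis using arc[of "j - 1"] eq by simp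
  next
    case False
    then have "Suc t mod ?p = Suc (t mod ?p)" by (simp add: mod_Suc)
    then show ?thesis using arc[of "i + t mod ?p"] by simp
  qed
qed

lemma min_pcyc_induced:
  assumes dg: "digraph V A" and S: "S \<subseteq> V" and R: "R = induced_arcs A S"
    and c: "pcyc R l g" and mn: "\<And>l' g'. pcyc R l' g' \<Longrightarrow> l \<le> l'"
  shows "induced_dicycle V A (map g [0..<l])"
proof -
  have arc: "(g s, g (Suc s)) \<in> R" for s using c by (simp add: pcyc_def)
  have gS: "g s \<in> S" for s using arc[of s] R by (auto simp: induced_arcs_def)
  have RA: "R \<subseteq> A" using R by (auto simp: induced_arcs_def)
  have RI: "(x, y) \<in> R" if "(x, y) \<in> A" "x \<in> S" "y \<in> S" for x y
    using that R by (auto simp: induced_arcs_def)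
  have noloop: "(x, x) \<notin> A" for x using dg by (auto simp: digraph_def)
  have l1: "l \<ge> 1" using c by (simp add: pcyc_def)
  have gl: "g l = g 0" using c unfolding pcyc_def by (metis add_0)
  have l2: "l \<ge> 2"
  proof (rule ccontr)
    assume "\<not> 2 \<le> l" then have "l = 1" using l1 by simp
    then show False using arc[of 0] gl RA noloop by auto
  qed
  have inj: "inj_on g {0..<l}"
  proof (rule inj_onI, rule ccontr)
    fix i j assume ij: "i \<in> {0..<l}" "j \<in> {0..<l}" "g i = g j" "i \<noteq> j"
    { fix a b assume ab: "a < b" "b < l" "g a = g b"
      from mn[OF pcyc_sub[OF c ab(1) ab(3)]] have False using ab by simp }
    with ij show False by (metis atLeastLessThan_iff linorder_neqE_nat)
  qed
  have adj: "(g i, g j) \<in> A \<longleftrightarrow> j = Suc i mod l" if ij: "i < l" "j < l" for i j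
  proof
    assume "j = Suc i mod l"
    then have "g j = g (Suc i)" using pcyc_mod[OF c] by simp
    then show "(g i, g j) \<in> A" using arc[of i] RA by auto
  next
    assume gA: "(g i, g j) \<in> A"
    show "j = Suc i mod l"
    proof (rule ccontr)
      assume nj: "j \<noteq> Suc i mod l"
      have "i \<noteq> j" using gA noloop by auto
      define d where "d = (j + l - i) mod l"
      have c': "pcyc R l (\<lambda>t. g (t + i))" by (rule pcyc_shift[OF c])
      have di: "(d + i) mod l = j"
      proof -
        have "(d + i) mod l = (j + l - i + i) mod l" unfolding d_def by (simp add: mod_add_left_eq)
        also have "\<dots> = (j + l) mod l" using ij by simp
        also have "\<dots> = j" using ij by simp
        finally show ?thesis .
      qed
      have gd: "g (d + i) = g j" using pcyc_mod[OF c, of "d + i"] di by simp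
      have dl: "d < l" using l1 by (simp add: d_def)
      have d0: "d \<noteq> 0" using di \<open>i \<noteq> j\<close> ij by (metis add_0 mod_less)
      have d1: "d \<noteq> 1" using di nj by (metis One_nat_def plus_1_eq_Suc)
      have ch: "(g (0 + i), g (d + i)) \<in> R" using gd gA gS RI by simp
      have "2 \<le> d" using d0 d1 by linarith
      from mn[OF pcyc_shortcut[OF c' this dl ch]] show False using d0 d1 dl by linarith
    qed
  qed
  show ?thesis
    unfolding induced_dicycle_def
  proof (intro conjI allI impI)
    show "distinct (map g [0..<l])" using inj by (simp add: distinct_map)
    show "set (map g [0..<l]) \<subseteq> V" using gS S by auto
    show "2 \<le> length (map g [0..<l])" using l2 by simp
    fix i j assume "i < length (map g [0..<l])" "j < length (map g [0..<l])"
    then show "((map g [0..<l]) ! i, (map g [0..<l]) ! j) \<in> A \<longleftrightarrow> j = Suc i mod length (map g [0..<l])"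
      using adj by simp
  qed
qed



lemma min_pcyc_exists:
  assumes "\<not> acyclic R"
  shows "\<exists>l g. pcyc R l g \<and> (\<forall>l' g'. pcyc R l' g' \<longrightarrow> l \<le> l')"
proof -
  have ex: "\<exists>l. \<exists>g. pcyc R l g" using not_acyclic_pcyc[OF assms] by blast
  define L where "L = (LEAST l. \<exists>g. pcyc R l g)"
  obtain g where "pcyc R L g" using LeastI_ex[OF ex] L_def by blast
  moreover have "\<forall>l' g'. pcyc R l' g' \<longrightarrow> L \<le> l'" unfolding L_def by (blast intro: Least_le)
  ultimately show ?thesis by blast
qed

lemma bichrom_acyclic:
  assumes C3: "class_C3 V A" and hprop: "\<forall>(x, y)\<in>A. c x \<noteq> c y"
  shows "acyclic (induced_arcs A {v \<in> V. c v \<le> (1::nat)})"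
proof (rule ccontr)
  let ?S = "{v \<in> V. c v \<le> (1::nat)}"
  let ?R = "induced_arcs A ?S"
  assume "\<not> acyclic ?R"
  then obtain l g where c: "pcyc ?R l g" and mn: "\<And>l' g'. pcyc ?R l' g' \<Longrightarrow> l \<le> l'"
    using min_pcyc_exists by blast
  have dg: "digraph V A" using C3 by (simp add: class_C3_def)
  have ind: "induced_dicycle V A (map g [0..<l])"
    by (rule min_pcyc_induced[OF dg _ refl c mn]) auto
  have arc: "(g s, g (Suc s)) \<in> ?R" for s using c by (simp add: pcyc_def)
  have gS: "c (g s) \<le> 1" for s using arc[of s] by (auto simp: induced_arcs_def)
  have gA: "(g s, g (Suc s)) \<in> A" for s using arc[of s] by (auto simp: induced_arcs_def)
  have gl: "g l = g 0" using c unfolding pcyc_def by (metis add_0)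
  have l2: "l \<ge> 2" using ind by (simp add: induced_dicycle_def)
  have "l \<noteq> 2"
  proof
    assume "l = 2"
    then have "(g 0, g 1) \<in> A" "(g 1, g 0) \<in> A" using gA[of 0] gA[of 1] gl
      by (simp_all add: numeral_2_eq_2)
    then show False using dg unfolding digraph_def by blast
  qed
  moreover have "l \<noteq> 3"
  proof
    assume "l = 3"
    then have g3: "g 3 = g 0" using gl by simp
    have "c (g 0) \<noteq> c (g 1)" "c (g 1) \<noteq> c (g 2)" "c (g 2) \<noteq> c (g 0)"
      using hprop gA[of 0] gA[of 1] gA[of 2] g3 by (auto simp: numeral_2_eq_2 numeral_3_eq_3)
    then show False using gS[of 0] gS[of 1] gS[of 2] by linarith
  qed
  ultimately have "length (map g [0..<l]) \<ge> 4" using l2 by simp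
  then show False using C3 ind unfolding class_C3_def by blast
qed

lemma exists_mono_arc:
  assumes C3: "class_C3 V A" and dn: "dichromatic_number V A = k"
    and col: "dicolouring V A k c" and ne: "A \<noteq> {}"
  shows "\<exists>(x, y)\<in>A. c x = c y"
proof (rule ccontr)
  assume na: "\<not> (\<exists>(x, y)\<in>A. c x = c y)"
  then have hprop: "\<forall>(x, y)\<in>A. c x \<noteq> c y" by blast
  have dg: "digraph V A" using C3 by (simp add: class_C3_def)
  obtain x y where xy: "(x, y) \<in> A" using ne by auto
  then have xyV: "x \<in> V" "y \<in> V" using dg by (auto simp: digraph_def)
  have cl: "\<forall>v\<in>V. c v < k" using col by (simp add: dicolouring_def)
  have k2: "k \<ge> 2"
  proof (rule ccontr)
    assume "\<not> 2 \<le> k"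
    then have "k \<le> 1" by simp
    moreover have "c x < k" "c y < k" using cl xyV by auto
    ultimately have "c x = c y" by linarith
    then show False using hprop xy by auto
  qed
  define c' where "c' v = c v - 1" for v
  have "dicolouring V A (k - 1) c'"
    unfolding dicolouring_def
  proof (intro conjI allI impI ballI)
    fix v assume "v \<in> V" then show "c' v < k - 1" using cl k2 unfolding c'_def by fastforce
  next
    fix i assume i: "i < k - 1"
    show "acyclic (induced_arcs A {v \<in> V. c' v = i})"
    proof (cases "i = 0")
      case True
      then have "{v \<in> V. c' v = i} = {v \<in> V. c v \<le> 1}" unfolding c'_def by auto
      then show ?thesis using bichrom_acyclic[OF C3 hprop] by simp
    next
      case False
      then have "{v \<in> V. c' v = i} = {v \<in> V. c v = i + 1}" unfolding c'_def by auto
      moreover have "i + 1 < k" using i by simp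
      ultimately show ?thesis using col by (simp add: dicolouring_def)
    qed
  qed
  then have "dichromatic_number V A \<le> k - 1" unfolding dichromatic_number_def by (blast intro: Least_le)
  then show False using dn k2 by simp
qed



definition RP :: "('a \<times> 'a) set \<Rightarrow> 'a set \<Rightarrow> nat \<Rightarrow> (nat \<Rightarrow> 'a \<times> 'a) \<Rightarrow> ((nat \<times> 'a) \<times> (nat \<times> 'a)) set" where
  "RP A I m e = {((i, u), (i, v)) | i u v. i \<le> m \<and> (u, v) \<in> A}
     \<union> {((0, snd (e j)), (j, v)) | j v. j \<in> {1..m} \<and> v \<in> I}
     \<union> {((j, v), (0, fst (e j))) | j v. j \<in> {1..m} \<and> v \<in> I}"

lemma RP_iff:
  "((i, u), (j, v)) \<in> RP A I m e \<longleftrightarrow>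
     (i = j \<and> i \<le> m \<and> (u, v) \<in> A)
   \<or> (i = 0 \<and> j \<in> {1..m} \<and> v \<in> I \<and> u = snd (e j))
   \<or> (j = 0 \<and> i \<in> {1..m} \<and> u \<in> I \<and> v = fst (e i))"
  unfolding RP_def by auto

lemma pair_digraph:
  assumes dg: "digraph V A" and indep: "independent_set V A I" and eA: "\<forall>j\<in>{1..m}. e j \<in> A"
  shows "digraph ({..m} \<times> V) (RP A I m e)"
proof -
  have AV: "A \<subseteq> V \<times> V" and nl: "\<forall>v. (v, v) \<notin> A" and as: "\<forall>u v. (u, v) \<in> A \<longrightarrow> (v, u) \<notin> A"
    using dg by (auto simp: digraph_def)
  have IV: "I \<subseteq> V" using indep by (simp add: independent_set_def)
  have eV: "fst (e j) \<in> V" "snd (e j) \<in> V" if "j \<in> {1..m}" for j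
    using eA that AV by (metis mem_Sigma_iff prod.collapse subsetD)+
  have eA': "(fst (e j), snd (e j)) \<in> A" if "j \<in> {1..m}" for j using eA that by simp
  have ne: "fst (e j) \<noteq> snd (e j)" if "j \<in> {1..m}" for j using eA' nl that by metis
  have ne': "snd (e j) \<noteq> fst (e j)" if "j \<in> {1..m}" for j using ne that by metis
  show ?thesis
    unfolding digraph_def
  proof (intro conjI allI impI)
    show "finite ({..m} \<times> V)" using dg by (simp add: digraph_def)
    show "RP A I m e \<subseteq> ({..m} \<times> V) \<times> ({..m} \<times> V)"
    proof
      fix p assume "p \<in> RP A I m e"
      then obtain i u j v where p: "p = ((i, u), (j, v))" "((i, u), (j, v)) \<in> RP A I m e"
        by (metis prod.collapse)
      then show "p \<in> ({..m} \<times> V) \<times> ({..m} \<times> V)"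
        using AV IV eV unfolding RP_iff by auto
    qed
    fix a
    show "(a, a) \<notin> RP A I m e"
      using nl by (cases a) (auto simp: RP_iff)
  next
    fix a b assume "(a, b) \<in> RP A I m e"
    then show "(b, a) \<notin> RP A I m e"
      using as eA' nl ne ne' by (cases a; cases b) (auto simp: RP_iff)
  qed
qed

lemma pair_noTT3:
  assumes C3: "class_C3 V A" and indep: "independent_set V A I" and eA: "\<forall>j\<in>{1..m}. e j \<in> A"
  shows "\<not> has_TT3 ({..m} \<times> V) (RP A I m e)"
proof
  have dg: "digraph V A" and nt: "\<not> has_TT3 V A" using C3 by (auto simp: class_C3_def)
  have AV: "A \<subseteq> V \<times> V" and as: "\<forall>u v. (u, v) \<in> A \<longrightarrow> (v, u) \<notin> A"
    using dg by (auto simp: digraph_def)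
  have ind: "\<forall>u\<in>I. \<forall>v\<in>I. (u, v) \<notin> A" using indep by (simp add: independent_set_def)
  have eA': "(fst (e j), snd (e j)) \<in> A" if "j \<in> {1..m}" for j using eA that by simp
  assume "has_TT3 ({..m} \<times> V) (RP A I m e)"
  then obtain x y z where xyz: "x \<in> {..m} \<times> V" "y \<in> {..m} \<times> V" "z \<in> {..m} \<times> V"
    "x \<noteq> y" "y \<noteq> z" "x \<noteq> z" "(x, y) \<in> RP A I m e" "(y, z) \<in> RP A I m e" "(x, z) \<in> RP A I m e"
    unfolding has_TT3_def by blast
  obtain i1 u1 i2 u2 i3 u3 where p: "x = (i1, u1)" "y = (i2, u2)" "z = (i3, u3)"
    by (metis prod.collapse)
  have d: "(i1, u1) \<noteq> (i2, u2)" "(i2, u2) \<noteq> (i3, u3)" "(i1, u1) \<noteq> (i3, u3)"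
    and a: "((i1, u1), (i2, u2)) \<in> RP A I m e" "((i2, u2), (i3, u3)) \<in> RP A I m e"
      "((i1, u1), (i3, u3)) \<in> RP A I m e"
    and V: "u1 \<in> V" "u2 \<in> V" "u3 \<in> V" using xyz p by auto
  show False
    using d a V nt as ind eA' unfolding RP_iff has_TT3_def
    by auto
qed



lemma transition_exists:
  assumes "a < L" "b < L" "Q a" "\<not> Q b"
  shows "\<exists>t<L. Q t \<and> \<not> Q (Suc t mod L)"
proof (rule ccontr)
  assume "\<not> ?thesis"
  then have st: "\<And>t. t < L \<Longrightarrow> Q t \<Longrightarrow> Q (Suc t mod L)" by blast
  have L0: "L > 0" using assms by simp
  have "Q ((a + d) mod L)" for d
  proof (induction d)
    case 0 then show ?case using assms by simp
  next
    case (Suc d)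
    have "Q (Suc ((a + d) mod L) mod L)" using st[OF _ Suc] L0 by simp
    then show ?case by (simp add: mod_Suc_eq)
  qed
  from this[of "b + L - a"] have "Q ((b + L) mod L)" using assms by simp
  then show False using assms by simp
qed

lemma three_cycle_arith:
  assumes "a < L" "b < L" "c < L" "L \<ge> 4"
    "a = Suc b mod L" "b = Suc c mod L" "c = Suc a mod L"
  shows False
proof -
  have ms: "Suc x mod L = (if Suc x = L then 0 else Suc x)" if "x < L" for x
    using that by (simp add: mod_Suc)
  have e1: "a = (if Suc b = L then 0 else Suc b)" unfolding assms(5) by (rule ms[OF assms(2)])
  have e2: "b = (if Suc c = L then 0 else Suc c)" unfolding assms(6) by (rule ms[OF assms(3)])
  have e3: "c = (if Suc a = L then 0 else Suc a)" unfolding assms(7) by (rule ms[OF assms(1)])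
  have d1: "(Suc b = L \<and> a = 0) \<or> (Suc b < L \<and> a = Suc b)" using e1 assms(2) by (cases "Suc b = L") auto
  have d2: "(Suc c = L \<and> b = 0) \<or> (Suc c < L \<and> b = Suc c)" using e2 assms(3) by (cases "Suc c = L") auto
  have d3: "(Suc a = L \<and> c = 0) \<or> (Suc a < L \<and> c = Suc a)" using e3 assms(1) by (cases "Suc a = L") auto
  show False using d1 d2 d3 assms(4) by arith
qed

lemma pair_noind:
  assumes C3: "class_C3 V A" and indep: "independent_set V A I" and eA: "\<forall>j\<in>{1..m}. e j \<in> A"
    and ind: "induced_dicycle ({..m} \<times> V) (RP A I m e) vs" and len: "length vs \<ge> 4"
  shows False
proof -
  define L where "L = length vs"
  have adj: "\<And>i j. i < L \<Longrightarrow> j < L \<Longrightarrow> (vs ! i, vs ! j) \<in> RP A I m e \<longleftrightarrow> j = Suc i mod L"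
    using ind unfolding induced_dicycle_def L_def by blast
  have inP: "\<And>t. t < L \<Longrightarrow> vs ! t \<in> {..m} \<times> V"
    using ind unfolding induced_dicycle_def L_def by (meson nth_mem subsetD)
  have dist: "distinct vs" using ind by (simp add: induced_dicycle_def)
  have L4: "L \<ge> 4" using len L_def by simp
  have eA': "(fst (e j), snd (e j)) \<in> A" if "j \<in> {1..m}" for j using eA that by simp
  show False
  proof (cases "\<forall>t<L. fst (vs ! t) = fst (vs ! 0)")
    case True
    define i0 where "i0 = fst (vs ! 0)"
    define ws where "ws = map snd vs"
    have vsw: "vs ! t = (i0, ws ! t)" if "t < L" for t
      using True that unfolding i0_def ws_def L_def by (metis nth_map prod.collapse)
    have i0m: "i0 \<le> m" using inP[of 0] L4 vsw[of 0] by auto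
    have "induced_dicycle V A ws"
      unfolding induced_dicycle_def
    proof (intro conjI allI impI)
      have "inj_on snd (set vs)"
      proof (rule inj_onI)
        fix p q assume "p \<in> set vs" "q \<in> set vs" "snd p = snd q"
        then obtain a b where "a < L" "b < L" "p = vs ! a" "q = vs ! b"
          unfolding L_def by (metis in_set_conv_nth)
        then show "p = q" using vsw \<open>snd p = snd q\<close> by (metis snd_conv)
      qed
      then show "distinct ws" using dist unfolding ws_def by (simp add: distinct_map)
      show "set ws \<subseteq> V"
      proof
        fix w assume "w \<in> set ws"
        then obtain t where "t < L" "w = ws ! t" unfolding ws_def L_def by (metis in_set_conv_nth length_map)
        then show "w \<in> V" using inP[of t] vsw[of t] by auto
      qed
      show "2 \<le> length ws" using L4 unfolding ws_def L_def by simp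
      fix i j assume ij: "i < length ws" "j < length ws"
      then have ij': "i < L" "j < L" unfolding ws_def L_def by auto
      have "(ws ! i, ws ! j) \<in> A \<longleftrightarrow> (vs ! i, vs ! j) \<in> RP A I m e"
        using vsw[OF ij'(1)] vsw[OF ij'(2)] i0m by (auto simp: RP_iff)
      also have "\<dots> \<longleftrightarrow> j = Suc i mod L" using adj ij' by blast
      finally show "(ws ! i, ws ! j) \<in> A \<longleftrightarrow> j = Suc i mod length ws" unfolding ws_def L_def by simp
    qed
    moreover have "length ws \<ge> 4" using L4 unfolding ws_def L_def by simp
    ultimately show False using C3 unfolding class_C3_def by blast
  next
    case False
    then obtain t0 where t0: "t0 < L" "fst (vs ! t0) \<noteq> fst (vs ! 0)" by blast
    have L0: "0 < L" using L4 by simp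
    obtain j a b where jab: "j \<noteq> 0" "a < L" "b < L" "fst (vs ! a) = j" "fst (vs ! b) \<noteq> j"
    proof (cases "fst (vs ! 0) = 0")
      case True
      then show ?thesis using that[of "fst (vs ! t0)" t0 0] t0 L0 by auto
    next
      case False
      then show ?thesis using that[of "fst (vs ! 0)" 0 t0] t0 L0 by auto
    qed
    have jm: "j \<le> m" using inP[OF jab(2)] jab(4) by auto
    have j1: "j \<in> {1..m}" using jm jab(1) by simp
    obtain t1 where t1: "t1 < L" "fst (vs ! t1) = j" "fst (vs ! (Suc t1 mod L)) \<noteq> j"
      using transition_exists[of a L b "\<lambda>t. fst (vs ! t) = j"] jab by blast
    obtain t2 where t2: "t2 < L" "fst (vs ! t2) \<noteq> j" "fst (vs ! (Suc t2 mod L)) = j"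
      using transition_exists[of b L a "\<lambda>t. fst (vs ! t) \<noteq> j"] jab by blast
    define s1 where "s1 = Suc t1 mod L"
    define s2 where "s2 = Suc t2 mod L"
    have s12: "s1 < L" "s2 < L" using L0 unfolding s1_def s2_def by auto
    obtain v1 where v1: "vs ! t1 = (j, v1)" using t1 by (metis prod.collapse)
    obtain i' w where w: "vs ! s1 = (i', w)" by (metis prod.collapse)
    have "(vs ! t1, vs ! s1) \<in> RP A I m e" using adj[OF t1(1) s12(1)] s1_def by simp
    then have X: "vs ! s1 = (0, fst (e j))" using v1 w t1(3) jab(1) unfolding s1_def[symmetric]
      by (auto simp: RP_iff)
    obtain v2 where v2: "vs ! s2 = (j, v2)" using t2 unfolding s2_def by (metis prod.collapse)
    obtain i'' w2 where w2: "vs ! t2 = (i'', w2)" by (metis prod.collapse)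
    have "(vs ! t2, vs ! s2) \<in> RP A I m e" using adj[OF t2(1) s12(2)] s2_def by simp
    then have Y: "vs ! t2 = (0, snd (e j))" and v2I: "v2 \<in> I" using v2 w2 t2(2) jab(1)
      by (auto simp: RP_iff)
    have "(vs ! s1, vs ! t2) \<in> RP A I m e" using X Y eA'[OF j1] jm by (simp add: RP_iff)
    then have e1: "t2 = Suc s1 mod L" using adj[OF s12(1) t2(1)] by blast
    have "(vs ! s2, vs ! s1) \<in> RP A I m e" using X v2 v2I j1 by (simp add: RP_iff)
    then have e2: "s1 = Suc s2 mod L" using adj[OF s12(2) s12(1)] by blast
    show False using three_cycle_arith[OF t2(1) s12(1) s12(2) L4 e1 e2 s2_def] .
  qed
qed

lemma pair_C3:
  assumes C3: "class_C3 V A" and indep: "independent_set V A I" and eA: "\<forall>j\<in>{1..m}. e j \<in> A"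
  shows "class_C3 ({..m} \<times> V) (RP A I m e)"
  unfolding class_C3_def
proof (intro conjI)
  have dg: "digraph V A" using C3 by (simp add: class_C3_def)
  show "digraph ({..m} \<times> V) (RP A I m e)" by (rule pair_digraph[OF dg indep eA])
  show "\<not> has_TT3 ({..m} \<times> V) (RP A I m e)" by (rule pair_noTT3[OF C3 indep eA])
  show "\<not> (\<exists>vs. induced_dicycle ({..m} \<times> V) (RP A I m e) vs \<and> 4 \<le> length vs)"
    using pair_noind[OF C3 indep eA] by blast
qed



lemma transfer_C3:
  assumes C: "class_C3 P R" and inj: "inj_on F P"
  shows "class_C3 (F ` P) (map_prod F F ` R)"
proof -
  have dg: "digraph P R" and nt: "\<not> has_TT3 P R"
    and ni: "\<not> (\<exists>vs. induced_dicycle P R vs \<and> length vs \<ge> 4)" using C by (auto simp: class_C3_def)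
  have RP: "R \<subseteq> P \<times> P" and nl: "\<forall>v. (v, v) \<notin> R" and as: "\<forall>u v. (u, v) \<in> R \<longrightarrow> (v, u) \<notin> R"
    and fin: "finite P" using dg by (auto simp: digraph_def)
  have key: "(F a, F b) \<in> map_prod F F ` R \<longleftrightarrow> (a, b) \<in> R" if "a \<in> P" "b \<in> P" for a b
  proof
    assume "(F a, F b) \<in> map_prod F F ` R"
    then obtain a' b' where "(a', b') \<in> R" "F a = F a'" "F b = F b'" by auto
    moreover then have "a' \<in> P" "b' \<in> P" using RP by auto
    ultimately show "(a, b) \<in> R" using inj that by (metis inj_onD)
  qed force
  have elt: "\<exists>a b. a \<in> P \<and> b \<in> P \<and> (a, b) \<in> R \<and> p = (F a, F b)" if "p \<in> map_prod F F ` R" for p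
    using that RP by auto
  show ?thesis
    unfolding class_C3_def
  proof (intro conjI)
    show "digraph (F ` P) (map_prod F F ` R)"
      unfolding digraph_def
    proof (intro conjI allI impI)
      show "finite (F ` P)" using fin by simp
      show "map_prod F F ` R \<subseteq> F ` P \<times> F ` P" using RP by (auto simp: map_prod_def)
      fix v show "(v, v) \<notin> map_prod F F ` R"
      proof
        assume "(v, v) \<in> map_prod F F ` R"
        from elt[OF this] obtain a b where "a \<in> P" "b \<in> P" "(a, b) \<in> R" "v = F a" "v = F b" by auto
        then have "F a = F b" by simp
        then have "a = b" using inj_onD[OF inj] \<open>a \<in> P\<close> \<open>b \<in> P\<close> by blast
        then show False using nl \<open>(a, b) \<in> R\<close> by blast
      qed
    next
      fix u v assume "(u, v) \<in> map_prod F F ` R"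
      from elt[OF this] obtain a b where ab: "a \<in> P" "b \<in> P" "(a, b) \<in> R" "u = F a" "v = F b" by auto
      show "(v, u) \<notin> map_prod F F ` R"
      proof
        assume "(v, u) \<in> map_prod F F ` R"
        then have "(b, a) \<in> R" using key[OF ab(2) ab(1)] ab(4,5) by simp
        then show False using as ab(3) by blast
      qed
    qed
    show "\<not> has_TT3 (F ` P) (map_prod F F ` R)"
    proof
      assume "has_TT3 (F ` P) (map_prod F F ` R)"
      then obtain x y z where xyz: "x \<in> F ` P" "y \<in> F ` P" "z \<in> F ` P" "x \<noteq> y" "y \<noteq> z" "x \<noteq> z"
        "(x, y) \<in> map_prod F F ` R" "(y, z) \<in> map_prod F F ` R" "(x, z) \<in> map_prod F F ` R"
        unfolding has_TT3_def by (elim bexE conjE) (rule that; assumption)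
      obtain a where a: "a \<in> P" "x = F a" using xyz(1) by blast
      obtain b where b: "b \<in> P" "y = F b" using xyz(2) by blast
      obtain c where c: "c \<in> P" "z = F c" using xyz(3) by blast
      have abc: "a \<in> P" "b \<in> P" "c \<in> P" "F a \<noteq> F b" "F b \<noteq> F c" "F a \<noteq> F c"
        "(F a, F b) \<in> map_prod F F ` R" "(F b, F c) \<in> map_prod F F ` R" "(F a, F c) \<in> map_prod F F ` R"
        using xyz a b c by simp_all
      have "(a, b) \<in> R" "(b, c) \<in> R" "(a, c) \<in> R" using key abc by simp_all
      moreover have "a \<noteq> b" "b \<noteq> c" "a \<noteq> c" using abc(4-6) by auto
      ultimately have "has_TT3 P R" unfolding has_TT3_def using abc(1-3) by blast
      then show False using nt by simp
    qed
    show "\<not> (\<exists>vs. induced_dicycle (F ` P) (map_prod F F ` R) vs \<and> 4 \<le> length vs)"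
    proof
      assume "\<exists>vs. induced_dicycle (F ` P) (map_prod F F ` R) vs \<and> 4 \<le> length vs"
      then obtain vs where ind: "induced_dicycle (F ` P) (map_prod F F ` R) vs" and len: "4 \<le> length vs"
        by blast
      define ws where "ws = map (inv_into P F) vs"
      obtain dv sv adjv where dv: "distinct vs" and sv: "set vs \<subseteq> F ` P"
        and adjv: "\<forall>i < length vs. \<forall>j < length vs.
          (vs ! i, vs ! j) \<in> map_prod F F ` R \<longleftrightarrow> j = Suc i mod length vs"
        using ind unfolding induced_dicycle_def by (elim conjE) (rule that; assumption)
      have wsP: "ws ! t \<in> P" "F (ws ! t) = vs ! t" if "t < length vs" for t
      proof -
        have m: "vs ! t \<in> F ` P" using subsetD[OF sv nth_mem[OF that]] .
        have w: "ws ! t = inv_into P F (vs ! t)" using that unfolding ws_def by simp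
        show "ws ! t \<in> P" unfolding w by (rule inv_into_into[OF m])
        show "F (ws ! t) = vs ! t" unfolding w by (rule f_inv_into_f[OF m])
      qed
      have "induced_dicycle P R ws"
        unfolding induced_dicycle_def
      proof (intro conjI allI impI)
        have "inj_on (inv_into P F) (set vs)" by (rule inj_on_inv_into[OF sv])
        then show "distinct ws" using dv unfolding ws_def distinct_map by blast
        show "set ws \<subseteq> P" using sv unfolding ws_def by (auto intro: inv_into_into)
        show "2 \<le> length ws" using len unfolding ws_def by simp
        fix i j assume ij: "i < length ws" "j < length ws"
        then have ij': "i < length vs" "j < length vs" unfolding ws_def by auto
        have "(ws ! i, ws ! j) \<in> R \<longleftrightarrow> (vs ! i, vs ! j) \<in> map_prod F F ` R"
          using key[OF wsP(1)[OF ij'(1)] wsP(1)[OF ij'(2)]] wsP(2)[OF ij'(1)] wsP(2)[OF ij'(2)] by simp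
        also have "\<dots> \<longleftrightarrow> j = Suc i mod length vs" using adjv ij' by simp
        finally show "(ws ! i, ws ! j) \<in> R \<longleftrightarrow> j = Suc i mod length ws" unfolding ws_def by simp
      qed
      moreover have "length ws \<ge> 4" using len unfolding ws_def by simp
      ultimately show False using ni by blast
    qed
  qed
qed



lemma final_arith:
  fixes m n :: nat
  assumes h: "2 * m \<le> n ^ 2" and n2: "2 \<le> n"
  shows "n * (m + 1) \<le> n ^ 4" "m * (m + 1) + m * n ^ 2 \<le> n ^ 4"
proof -
  define N where "N = n ^ 2"
  have n4: "n ^ 4 = N * N" unfolding N_def using power_add[of n 2 2] by simp
  have nN: "n \<le> N" unfolding N_def using n2 by (simp add: power2_eq_square)
  have N4: "4 \<le> N" unfolding N_def power2_eq_square using mult_le_mono[OF n2 n2] by simp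
  have hN: "2 * m \<le> N" using h unfolding N_def .
  have m1: "m + 1 \<le> N" using hN N4 by linarith
  have "n * (m + 1) \<le> N * N" using mult_le_mono[OF nN m1] by simp
  then show "n * (m + 1) \<le> n ^ 4" unfolding n4 .
  have a1: "(2 * m) * (2 * m) \<le> N * N" using mult_le_mono[OF hN hN] .
  have a2: "(2 * m) * N \<le> N * N" using mult_le_mono[OF hN order.refl] .
  have a3: "2 * N \<le> N * N" using mult_le_mono[OF _ order.refl, of 2 N N] N4 by linarith
  have "4 * (m * (m + 1) + m * N) = (2 * m) * (2 * m) + 2 * (2 * m) + 2 * ((2 * m) * N)"
    by (simp add: algebra_simps)
  also have "\<dots> \<le> N * N + 2 * N + 2 * (N * N)" using a1 a2 hN by linarith
  also have "\<dots> \<le> 4 * (N * N)" using a3 by linarith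
  finally have "4 * (m * (m + 1) + m * N) \<le> 4 * (N * N)" .
  moreover have "\<And>a b :: nat. 4 * a \<le> 4 * b \<Longrightarrow> a \<le> b" by linarith
  ultimately have "m * (m + 1) + m * N \<le> N * N" by blast
  then show "m * (m + 1) + m * n ^ 2 \<le> n ^ 4" unfolding n4 N_def .
qed

lemma map_key:
  assumes RP: "R \<subseteq> P \<times> P" and inj: "inj_on F P" and ab: "a \<in> P" "b \<in> P"
  shows "(F a, F b) \<in> map_prod F F ` R \<longleftrightarrow> (a, b) \<in> R"
proof
  assume "(F a, F b) \<in> map_prod F F ` R"
  then obtain a' b' where "(a', b') \<in> R" "F a = F a'" "F b = F b'" by auto
  moreover then have "a' \<in> P" "b' \<in> P" using RP by auto
  ultimately show "(a, b) \<in> R" using inj ab by (metis inj_onD)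
qed force

lemma triangle_pcyc:
  assumes "(X, Y) \<in> R" "(Y, Z) \<in> R" "(Z, X) \<in> R"
  shows "pcyc R 3 (\<lambda>t::nat. if t mod 3 = 0 then X else if t mod 3 = 1 then Y else Z)"
  unfolding pcyc_def
proof (intro conjI allI)
  fix t :: nat
  show "(if (t + 3) mod 3 = 0 then X else if (t + 3) mod 3 = 1 then Y else Z)
      = (if t mod 3 = 0 then X else if t mod 3 = 1 then Y else Z)" by simp
  have s: "Suc t mod 3 = (if Suc (t mod 3) = 3 then 0 else Suc (t mod 3))" by (rule mod_Suc)
  have "t mod 3 < 3" by simp
  then consider "t mod 3 = 0" | "t mod 3 = 1" | "t mod 3 = 2" by linarith
  then show "(if t mod 3 = 0 then X else if t mod 3 = 1 then Y else Z,
          if Suc t mod 3 = 0 then X else if Suc t mod 3 = 1 then Y else Z) \<in> R"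
    by cases (use assms s in simp_all)
qed simp

theorem lemma1:
  fixes V :: "'a set" and A :: "('a \<times> 'a) set" and I :: "'a set" and k n m :: nat
  assumes "k \<ge> 1"
    and "class_C3 V A"
    and "card V = n" and "card A = m" and "m \<ge> 1"
    and "dichromatic_number V A = k"
    and "independent_set V A I"
  shows "\<exists>(W :: nat set) (B :: (nat \<times> nat) set) (f :: nat \<Rightarrow> 'a \<Rightarrow> nat).
     class_C3 W B
     \<and> (\<forall>i\<in>{1..m}. is_copy V A W B (f i))
     \<and> (\<forall>i\<in>{1..m}. \<forall>j\<in>{1..m}. i \<noteq> j \<longrightarrow> f i ` V \<inter> f j ` V = {})
     \<and> (\<forall>i\<in>{1..m}. \<forall>j\<in>{1..m}. i \<noteq> j \<longrightarrow>
          (\<forall>u\<in>V. \<forall>v\<in>V. (f i u, f j v) \<notin> B))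
     \<and> (\<forall>c. dicolouring W B k c \<longrightarrow>
          (\<exists>i\<in>{1..m}. \<exists>\<alpha><k. \<forall>v\<in>I. c (f i v) \<noteq> \<alpha>))
     \<and> card W = n * (m + 1) \<and> n * (m + 1) \<le> n ^ 4
     \<and> card B \<le> m * (m + 1) + m * n ^ 2 \<and> m * (m + 1) + m * n ^ 2 \<le> n ^ 4"
proof -
  have C3: "class_C3 V A" using assms(2) .
  have indep: "independent_set V A I" using assms(7) .
  have dn: "dichromatic_number V A = k" using assms(6) .
  have dg: "digraph V A" using C3 by (simp add: class_C3_def)
  have finV: "finite V" and AV: "A \<subseteq> V \<times> V" and nl: "\<forall>v. (v, v) \<notin> A"
    and as: "\<forall>u v. (u, v) \<in> A \<longrightarrow> (v, u) \<notin> A" using dg unfolding digraph_def by blast+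
  have finA: "finite A" using finite_subset[OF AV] finV by blast
  have IV: "I \<subseteq> V" using indep by (simp add: independent_set_def)
  have Ane: "A \<noteq> {}" using assms(4,5) by auto
  obtain e where e: "bij_betw e {1..m} A"
    using ex_bij_betw_nat_finite_1[OF finA] assms(4) by blast
  have eA: "\<forall>j\<in>{1..m}. e j \<in> A" using e by (auto simp: bij_betw_def)
  obtain idx where idx: "bij_betw idx V {0..<n}"
    using ex_bij_betw_finite_nat[OF finV] assms(3) by blast
  have idxlt: "idx u < n" if "u \<in> V" for u using idx that by (auto simp: bij_betw_def)
  have idxinj: "inj_on idx V" using idx by (simp add: bij_betw_def)
  obtain x0 y0 where xy0: "(x0, y0) \<in> A" using Ane by auto
  have n2: "n \<ge> 2"
  proof -
    have "x0 \<noteq> y0" using xy0 nl by auto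
    moreover have "{x0, y0} \<subseteq> V" using xy0 AV by auto
    ultimately have "card {x0, y0} \<le> card V" using finV card_mono by blast
    then show ?thesis using \<open>x0 \<noteq> y0\<close> assms(3) by simp
  qed
  define F :: "nat \<times> 'a \<Rightarrow> nat" where "F = (\<lambda>(i, u). i * n + idx u)"
  define P where "P = {..m} \<times> V"
  define R where "R = RP A I m e"
  define W where "W = F ` P"
  define B where "B = map_prod F F ` R"
  define f where "f = (\<lambda>i u. F (i, u))"
  have Fsimp: "F (i, u) = i * n + idx u" for i u by (simp add: F_def)
  have injF: "inj_on F P"
  proof (rule inj_onI)
    fix a b assume ab: "a \<in> P" "b \<in> P" "F a = F b"
    obtain i u where a: "a = (i, u)" by (cases a)
    obtain j v where b: "b = (j, v)" by (cases b)
    have uv: "u \<in> V" "v \<in> V" using ab a b P_def by auto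
    have eq: "idx u + i * n = idx v + j * n" using ab(3) a b Fsimp by simp
    have n0: "n \<noteq> 0" using n2 by simp
    have "(idx u + i * n) div n = i" using idxlt[OF uv(1)] n0 by simp
    moreover have "(idx v + j * n) div n = j" using idxlt[OF uv(2)] n0 by simp
    ultimately have ij: "i = j" using eq by simp
    then have "idx u = idx v" using eq by simp
    then have "u = v" using idxinj uv by (meson inj_onD)
    then show "a = b" using a b ij by simp
  qed
  have C3P: "class_C3 P R" unfolding P_def R_def by (rule pair_C3[OF C3 indep eA])
  have RsubP: "R \<subseteq> P \<times> P" using C3P unfolding class_C3_def digraph_def by blast
  have finP: "finite P" unfolding P_def using finV by simp
  have key: "(F a, F b) \<in> B \<longleftrightarrow> (a, b) \<in> R" if "a \<in> P" "b \<in> P" for a b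
    unfolding B_def by (rule map_key[OF RsubP injF that])
  have inP: "(i, u) \<in> P" if "i \<le> m" "u \<in> V" for i u using that P_def by simp
  have Rarc: "((i, u), (j, v)) \<in> R \<longleftrightarrow>
     (i = j \<and> i \<le> m \<and> (u, v) \<in> A)
   \<or> (i = 0 \<and> j \<in> {1..m} \<and> v \<in> I \<and> u = snd (e j))
   \<or> (j = 0 \<and> i \<in> {1..m} \<and> u \<in> I \<and> v = fst (e i))" for i u j v
    unfolding R_def by (rule RP_iff)
  have c1: "class_C3 W B" unfolding W_def B_def by (rule transfer_C3[OF C3P injF])
  have c2: "\<forall>i\<in>{1..m}. is_copy V A W B (f i)"
  proof
    fix i assume i: "i \<in> {1..m}"
    show "is_copy V A W B (f i)"
      unfolding is_copy_def
    proof (intro conjI ballI)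
      show "inj_on (f i) V"
      proof (rule inj_onI)
        fix u v assume "u \<in> V" "v \<in> V" "f i u = f i v"
        then show "u = v" using injF inP i unfolding f_def by (auto dest: inj_onD)
      qed
      show "f i ` V \<subseteq> W" using inP i unfolding f_def W_def by auto
      fix u v assume uv: "u \<in> V" "v \<in> V"
      have "(f i u, f i v) \<in> B \<longleftrightarrow> ((i, u), (i, v)) \<in> R"
        unfolding f_def using key inP i uv by simp
      also have "\<dots> \<longleftrightarrow> (u, v) \<in> A" using Rarc i by auto
      finally show "(f i u, f i v) \<in> B \<longleftrightarrow> (u, v) \<in> A" .
    qed
  qed
  have c3: "\<forall>i\<in>{1..m}. \<forall>j\<in>{1..m}. i \<noteq> j \<longrightarrow> f i ` V \<inter> f j ` V = {}"
  proof (intro ballI impI)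
    fix i j assume ij: "i \<in> {1..m}" "j \<in> {1..m}" "i \<noteq> j"
    show "f i ` V \<inter> f j ` V = {}"
    proof (rule ccontr)
      assume "f i ` V \<inter> f j ` V \<noteq> {}"
      then obtain u v where uv: "u \<in> V" "v \<in> V" "F (i, u) = F (j, v)" unfolding f_def by auto
      then have "(i, u) = (j, v)" using injF inP ij by (auto dest: inj_onD)
      then show False using ij by simp
    qed
  qed
  have c4: "\<forall>i\<in>{1..m}. \<forall>j\<in>{1..m}. i \<noteq> j \<longrightarrow> (\<forall>u\<in>V. \<forall>v\<in>V. (f i u, f j v) \<notin> B)"
  proof (intro ballI impI)
    fix i j u v assume ij: "i \<in> {1..m}" "j \<in> {1..m}" "i \<noteq> j" and uv: "u \<in> V" "v \<in> V"
    have "(f i u, f j v) \<in> B \<longleftrightarrow> ((i, u), (j, v)) \<in> R"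
      unfolding f_def using key inP ij uv by simp
    also have "\<dots> \<longleftrightarrow> False" using Rarc ij by auto
    finally show "(f i u, f j v) \<notin> B" by simp
  qed
  have c5: "\<forall>c. dicolouring W B k c \<longrightarrow> (\<exists>i\<in>{1..m}. \<exists>\<alpha><k. \<forall>v\<in>I. c (f i v) \<noteq> \<alpha>)"
  proof (intro allI impI)
    fix c assume col: "dicolouring W B k c"
    have cW: "c w < k" if "w \<in> W" for w using col that by (simp add: dicolouring_def)
    have cacyc: "acyclic (induced_arcs B {w \<in> W. c w = \<alpha>})" if "\<alpha> < k" for \<alpha>
      using col that by (simp add: dicolouring_def)
    have FW: "F (i, u) \<in> W" if "i \<le> m" "u \<in> V" for i u using inP[OF that] W_def by simp
    define c0 where "c0 u = c (F (0, u))" for u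
    have col0: "dicolouring V A k c0"
      unfolding dicolouring_def
    proof (intro conjI ballI allI impI)
      fix u assume "u \<in> V" then show "c0 u < k" unfolding c0_def using cW FW by simp
    next
      fix \<alpha> assume \<alpha>: "\<alpha> < k"
      show "acyclic (induced_arcs A {u \<in> V. c0 u = \<alpha>})"
      proof (rule ccontr)
        assume "\<not> acyclic (induced_arcs A {u \<in> V. c0 u = \<alpha>})"
        then obtain l g where cy: "pcyc (induced_arcs A {u \<in> V. c0 u = \<alpha>}) l g"
          using not_acyclic_pcyc by blast
        have "pcyc (induced_arcs B {w \<in> W. c w = \<alpha>}) l (\<lambda>t. F (0, g t))"
          unfolding pcyc_def
        proof (intro conjI allI)
          show "1 \<le> l" using cy by (simp add: pcyc_def)
          fix t
          show "F (0, g (t + l)) = F (0, g t)" using cy by (simp add: pcyc_def)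
          have "(g t, g (Suc t)) \<in> induced_arcs A {u \<in> V. c0 u = \<alpha>}" using cy by (simp add: pcyc_def)
          then have gg: "(g t, g (Suc t)) \<in> A" "g t \<in> V" "g (Suc t) \<in> V" "c0 (g t) = \<alpha>" "c0 (g (Suc t)) = \<alpha>"
            by (auto simp: induced_arcs_def)
          have "((0, g t), (0, g (Suc t))) \<in> R" using Rarc gg by simp
          then have "(F (0, g t), F (0, g (Suc t))) \<in> B" using key inP gg by simp
          then show "(F (0, g t), F (0, g (Suc t))) \<in> induced_arcs B {w \<in> W. c w = \<alpha>}"
            using FW gg unfolding induced_arcs_def c0_def by simp
        qed
        then show False using pcyc_not_acyclic cacyc[OF \<alpha>] by blast
      qed
    qed
    obtain x y where xy: "(x, y) \<in> A" "c0 x = c0 y"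
      using exists_mono_arc[OF C3 dn col0 Ane] by blast
    have xyV: "x \<in> V" "y \<in> V" using xy AV by auto
    define \<alpha> where "\<alpha> = c0 x"
    have \<alpha>k: "\<alpha> < k" unfolding \<alpha>_def c0_def using cW FW xyV by simp
    define j where "j = inv_into {1..m} e (x, y)"
    have j: "j \<in> {1..m}" "e j = (x, y)"
      using e xy(1) unfolding j_def bij_betw_def by (auto intro: inv_into_into f_inv_into_f)
    have "\<forall>v\<in>I. c (f j v) \<noteq> \<alpha>"
    proof (intro ballI notI)
      fix v assume v: "v \<in> I" and cv: "c (f j v) = \<alpha>"
      have vV: "v \<in> V" using v IV by auto
      let ?S = "{w \<in> W. c w = \<alpha>}"
      have X: "F (0, x) \<in> ?S" using FW xyV \<alpha>_def c0_def by simp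
      have Y: "F (0, y) \<in> ?S" using FW xyV \<alpha>_def c0_def xy(2) by simp
      have Z: "F (j, v) \<in> ?S" using FW vV j cv f_def by simp
      have a1: "((0, x), (0, y)) \<in> R" using Rarc xy by simp
      have a2: "((0, y), (j, v)) \<in> R" using Rarc j v by simp
      have a3: "((j, v), (0, x)) \<in> R" using Rarc j v by simp
      have b1: "(F (0, x), F (0, y)) \<in> induced_arcs B ?S"
        using key[OF inP inP] a1 xyV X Y unfolding induced_arcs_def by simp
      have b2: "(F (0, y), F (j, v)) \<in> induced_arcs B ?S"
        using key[OF inP inP] a2 xyV vV j Y Z unfolding induced_arcs_def by simp
      have b3: "(F (j, v), F (0, x)) \<in> induced_arcs B ?S"
        using key[OF inP inP] a3 xyV vV j X Z unfolding induced_arcs_def by simp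
      show False using pcyc_not_acyclic[OF triangle_pcyc[OF b1 b2 b3]] cacyc[OF \<alpha>k] by blast
    qed
    then show "\<exists>i\<in>{1..m}. \<exists>\<alpha><k. \<forall>v\<in>I. c (f i v) \<noteq> \<alpha>" using j \<alpha>k by blast
  qed
  have cardW: "card W = n * (m + 1)"
    unfolding W_def using card_image[OF injF] P_def assms(3) by (simp add: card_cartesian_product)
  have twom: "2 * m \<le> n ^ 2"
  proof -
    have cv: "converse A = prod.swap ` A" by auto
    have "card (converse A) = m" using cv assms(4) by (simp add: card_image)
    moreover have "A \<inter> converse A = {}" using as by auto
    moreover have "finite (converse A)" using finA by simp
    ultimately have "card (A \<union> converse A) = 2 * m" using finA assms(4) by (simp add: card_Un_disjoint)
    moreover have "A \<union> converse A \<subseteq> V \<times> V" using AV by auto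
    ultimately have "2 * m \<le> card (V \<times> V)" using finV by (metis card_mono finite_cartesian_product)
    then show ?thesis using assms(3) by (simp add: card_cartesian_product power2_eq_square)
  qed
  have cardI: "card I \<le> n" using card_mono[OF finV IV] assms(3) by simp
  have cardB: "card B \<le> m * (m + 1) + m * n ^ 2"
  proof -
    define R1 where "R1 = (\<lambda>(i, p). ((i, fst p), (i, snd p))) ` ({..m} \<times> A)"
    define R2 where "R2 = (\<lambda>(j, v). ((0::nat, snd (e j)), (j, v))) ` ({1..m} \<times> I)"
    define R3 where "R3 = (\<lambda>(j, v). ((j, v), (0::nat, fst (e j)))) ` ({1..m} \<times> I)"
    have Rsub: "R \<subseteq> R1 \<union> R2 \<union> R3"
    proof
      fix p assume p: "p \<in> R"
      then show "p \<in> R1 \<union> R2 \<union> R3"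
        unfolding R_def RP_def R1_def R2_def R3_def by force
    qed
    have finR: "finite (R1 \<union> R2 \<union> R3)" unfolding R1_def R2_def R3_def
      using finA finite_subset[OF IV finV] by auto
    have "card B \<le> card R" unfolding B_def by (rule card_image_le) (use finite_subset[OF RsubP] finP in auto)
    also have "\<dots> \<le> card (R1 \<union> R2 \<union> R3)" by (rule card_mono[OF finR Rsub])
    also have "\<dots> \<le> card R1 + card R2 + card R3" by (meson card_Un_le le_trans add_le_mono order.refl)
    also have "card R1 \<le> (m + 1) * m" unfolding R1_def using card_image_le[of "{..m} \<times> A"] finA assms(4)
      by (simp add: card_cartesian_product)
    also have "card R2 \<le> m * n"
    proof -
      have "card R2 \<le> m * card I" unfolding R2_def using card_image_le[of "{1..m} \<times> I"] finite_subset[OF IV finV]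
        by (simp add: card_cartesian_product)
      also have "\<dots> \<le> m * n" using cardI by simp
      finally show ?thesis .
    qed
    also have "card R3 \<le> m * n"
    proof -
      have "card R3 \<le> m * card I" unfolding R3_def using card_image_le[of "{1..m} \<times> I"] finite_subset[OF IV finV]
        by (simp add: card_cartesian_product)
      also have "\<dots> \<le> m * n" using cardI by simp
      finally show ?thesis .
    qed
    finally have "card B \<le> (m + 1) * m + m * n + m * n" by simp
    moreover have "m * n + m * n \<le> m * n ^ 2"
    proof -
      have "2 * n \<le> n * n" using mult_le_mono1[OF n2, of n] by simp
      then have "m * (2 * n) \<le> m * (n * n)" by (rule mult_le_mono2)
      moreover have "m * (2 * n) = m * n + m * n" by simp
      ultimately show ?thesis by (simp add: power2_eq_square)
    qed
    ultimately show ?thesis by (simp add: algebra_simps)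
  qed
  have fa: "n * (m + 1) \<le> n ^ 4" "m * (m + 1) + m * n ^ 2 \<le> n ^ 4" using final_arith[OF twom n2] by simp_all
  show ?thesis
    apply (rule exI[of _ W], rule exI[of _ B], rule exI[of _ f])
    using c1 c2 c3 c4 c5 cardW cardB fa by blast
qed


end
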